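(* For $q^ip^j\in\mathcal{C}(p,q)$ and $n\in\omega$ let $O_n(q^ip^j)=\{q^ip^j\}\cup\big(\downarrow_{\preceq}q^{i+n}p^{j+n}\setminus\{q^{i+n}p^{j+n}\}\big)$, and let $\tau_2$ be the topology on $\mathcal{C}(p,q)$ generated by the neighbourhood bases $\{O_n(q^ip^j):n\in\omega\}$ at each point. Then $(\mathcal{C}(p,q),\tau_2)$ is a $T_1$ locally compact topological inverse semigroup.
   Context: The bicyclic monoid $\mathcal{C}(p,q)$ is the monoid generated by $p,q$ subject only to $pq=1$; elements are uniquely $q^ip^j$, $i,j\in\omega$, with multiplication $q^kp^l\cdot q^mp^n = q^{k-l+m}p^n$ if $l<m$, $=q^kp^n$ if $l=m$, $=q^kp^{l-m+n}$ if $l>m$, and inversion $(q^ip^j)^{-1}=q^jp^i$. The natural partial order: $q^ip^j\preceq q^sp^t$ iff $i\ge s$ and $i-j=s-t$; $\downarrow_{\preceq}x=\{y:y\preceq x\}$, so $\downarrow_{\preceq}q^ap^b=\{q^{a+k}p^{b+k}:k\in\omega\}$. A topological inverse semigroup is an inverse semigroup with a topology making multiplication jointly continuous and inversion continuous; locally compact means every point has a compact neighbourhood. *)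

theory Defs
  imports "HOL-Analysis.Analysis"
begin

text \<open>The bicyclic monoid C(p,q): the element q^i p^j is represented by the pair (i,j).\<close>

type_synonym bicyclic = "nat \<times> nat"

fun bc_mult :: "bicyclic \<Rightarrow> bicyclic \<Rightarrow> bicyclic" where
  "bc_mult (k, l) (m, n) =
     (if l < m then (k + (m - l), n)
      else if l = m then (k, n)
      else (k, (l - m) + n))"

fun bc_inv :: "bicyclic \<Rightarrow> bicyclic" where
  "bc_inv (i, j) = (j, i)"

fun bc_le :: "bicyclic \<Rightarrow> bicyclic \<Rightarrow> bool" where
  "bc_le (i, j) (s, t) \<longleftrightarrow> i \<ge> s \<and> int i - int j = int s - int t"

definition bc_down :: "bicyclic \<Rightarrow> bicyclic set" where
  "bc_down x = {y. bc_le y x}"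

definition bc_O :: "nat \<Rightarrow> bicyclic \<Rightarrow> bicyclic set" where
  "bc_O n x = {x} \<union> (bc_down (fst x + n, snd x + n) - {(fst x + n, snd x + n)})"

definition tau2 :: "bicyclic topology" where
  "tau2 = topology (\<lambda>U. \<forall>x\<in>U. \<exists>n. bc_O n x \<subseteq> U)"

end

theory Submission
  imports Defs
begin

lemma mem_bc_O:
  "y \<in> bc_O n x \<longleftrightarrow> y = x \<or> (\<exists>s>n. y = (fst x + s, snd x + s))"
proof -
  obtain i j where x: "x = (i,j)" by force
  obtain a b where y: "y = (a,b)" by force
  have "bc_le (a,b) (i+n, j+n) \<and> (a,b) \<noteq> (i+n,j+n) \<longleftrightarrow> (\<exists>s>n. (a,b) = (i+s, j+s))"
  proof
    assume h: "bc_le (a,b) (i+n, j+n) \<and> (a,b) \<noteq> (i+n,j+n)"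
    then have "a \<ge> i+n" "int a - int b = int (i+n) - int (j+n)" by auto
    then show "\<exists>s>n. (a,b) = (i+s, j+s)" using h
      by (intro exI[of _ "a - i"]) auto
  qed auto
  then show ?thesis by (auto simp: bc_O_def bc_down_def x y)
qed

lemma bc_O_mono: "m \<le> n \<Longrightarrow> bc_O n x \<subseteq> bc_O m x"
  unfolding mem_bc_O subset_iff using le_less_trans by blast

lemma istop: "istopology (\<lambda>U. \<forall>x\<in>U. \<exists>n. bc_O n x \<subseteq> (U::bicyclic set))"
  unfolding istopology_def
proof (intro conjI allI impI)
  fix S T :: "bicyclic set"
  assume S: "\<forall>x\<in>S. \<exists>n. bc_O n x \<subseteq> S" and T: "\<forall>x\<in>T. \<exists>n. bc_O n x \<subseteq> T"
  show "\<forall>x\<in>S \<inter> T. \<exists>n. bc_O n x \<subseteq> S \<inter> T"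
  proof
    fix x assume "x \<in> S \<inter> T"
    then obtain n m where nm: "bc_O n x \<subseteq> S" "bc_O m x \<subseteq> T" using S T by blast
    have "bc_O (max n m) x \<subseteq> bc_O n x" by (rule bc_O_mono) simp
    moreover have "bc_O (max n m) x \<subseteq> bc_O m x" by (rule bc_O_mono) simp
    ultimately have "bc_O (max n m) x \<subseteq> S \<inter> T" using nm by blast
    then show "\<exists>n. bc_O n x \<subseteq> S \<inter> T" by blast
  qed
next
  fix KK :: "bicyclic set set"
  assume H: "\<forall>K\<in>KK. \<forall>x\<in>K. \<exists>n. bc_O n x \<subseteq> K"
  show "\<forall>x\<in>\<Union>KK. \<exists>n. bc_O n x \<subseteq> \<Union>KK"
  proof
    fix x assume "x \<in> \<Union>KK"
    then obtain K where K: "K \<in> KK" "x \<in> K" by blast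
    then obtain n where "bc_O n x \<subseteq> K" using H by blast
    then show "\<exists>n. bc_O n x \<subseteq> \<Union>KK" using K by blast
  qed
qed

lemma openin_tau2: "openin tau2 U \<longleftrightarrow> (\<forall>x\<in>U. \<exists>n. bc_O n x \<subseteq> U)"
  unfolding tau2_def using istop by simp

lemma topspace_tau2[simp]: "topspace tau2 = UNIV"
proof -
  have "openin tau2 UNIV" unfolding openin_tau2 by blast
  then show ?thesis using openin_subset by blast
qed

lemma open_bc_O: "openin tau2 (bc_O n x)"
  unfolding openin_tau2
proof
  fix y assume y: "y \<in> bc_O n x"
  show "\<exists>m. bc_O m y \<subseteq> bc_O n x"
  proof (cases "y = x")
    case True then show ?thesis by blast
  next
    case False
    then obtain s where s: "s > n" "y = (fst x + s, snd x + s)" using y by (auto simp: mem_bc_O)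
    have "bc_O 0 y \<subseteq> bc_O n x"
    proof
      fix z assume z: "z \<in> bc_O 0 y"
      show "z \<in> bc_O n x"
      proof (cases "z = y")
        case True then show ?thesis using y by simp
      next
        case False
        then obtain t where t: "t > 0" "z = (fst y + t, snd y + t)" using z by (auto simp: mem_bc_O)
        have "z = (fst x + (s+t), snd x + (s+t))" using s t by simp
        moreover have "s + t > n" using s t by simp
        ultimately show ?thesis unfolding mem_bc_O by blast
      qed
    qed
    then show ?thesis by blast
  qed
qed

lemma mult_shift:
  fixes k l m n' s t N :: nat
  assumes "s = 0 \<or> s > N + k + l + m + n'" "t = 0 \<or> t > N + k + l + m + n'" "s > 0 \<or> t > 0"
  shows "\<exists>r>N. bc_mult (k+s,l+s) (m+t,n'+t) = (fst (bc_mult (k,l) (m,n')) + r, snd (bc_mult (k,l) (m,n')) + r)"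
proof (rule exI[of _ "fst (bc_mult (k+s,l+s) (m+t,n'+t)) - fst (bc_mult (k,l) (m,n'))"])
  consider "l < m" | "l = m" | "l > m" by linarith
  then show "fst (bc_mult (k+s,l+s) (m+t,n'+t)) - fst (bc_mult (k,l) (m,n')) > N \<and> bc_mult (k+s,l+s) (m+t,n'+t) = (fst (bc_mult (k,l) (m,n')) + (fst (bc_mult (k+s,l+s) (m+t,n'+t)) - fst (bc_mult (k,l) (m,n'))), snd (bc_mult (k,l) (m,n')) + (fst (bc_mult (k+s,l+s) (m+t,n'+t)) - fst (bc_mult (k,l) (m,n'))))"
  proof cases
    case 1
    consider "l + s < m + t" | "l + s = m + t" | "l + s > m + t" by linarith
    then show ?thesis using 1 assms by cases auto
  next
    case 2
    consider "l + s < m + t" | "l + s = m + t" | "l + s > m + t" by linarith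
    then show ?thesis using 2 assms by cases auto
  next
    case 3
    consider "l + s < m + t" | "l + s = m + t" | "l + s > m + t" by linarith
    then show ?thesis using 3 assms by cases auto
  qed
qed

lemma mem_bc_O_param:
  assumes "x \<in> bc_O M (k,l)"
  obtains s where "x = (k+s, l+s)" "s = 0 \<or> s > M"
proof (cases "x = (k,l)")
  case True then show ?thesis using that[of 0] by simp
next
  case False
  then obtain s where "s > M" "x = (k+s, l+s)" using assms unfolding mem_bc_O by auto
  then show ?thesis using that by blast
qed

lemma mult_cont:
  "\<exists>M. \<forall>x\<in>bc_O M a. \<forall>y\<in>bc_O M b. bc_mult x y \<in> bc_O N (bc_mult a b)"
proof -
  obtain k l where a: "a = (k,l)" by force
  obtain m n' where b: "b = (m,n')" by force
  define M where "M = N + k + l + m + n'"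
  have "\<forall>x\<in>bc_O M a. \<forall>y\<in>bc_O M b. bc_mult x y \<in> bc_O N (bc_mult a b)"
  proof (intro ballI)
    fix x y assume x: "x \<in> bc_O M a" and y: "y \<in> bc_O M b"
    obtain s where s: "x = (k+s, l+s)" "s = 0 \<or> s > M" using x a mem_bc_O_param by metis
    obtain t where t: "y = (m+t, n'+t)" "t = 0 \<or> t > M" using y b mem_bc_O_param by metis
    show "bc_mult x y \<in> bc_O N (bc_mult a b)"
    proof (cases "s = 0 \<and> t = 0")
      case True then show ?thesis using s t a b by (simp add: bc_O_def)
    next
      case False
      then have "s > 0 \<or> t > 0" by simp
      from mult_shift[OF _ _ this, of N k l m n'] s t
      obtain r where "r > N" "bc_mult (k+s,l+s) (m+t,n'+t) = (fst (bc_mult (k,l) (m,n')) + r, snd (bc_mult (k,l) (m,n')) + r)"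
        unfolding M_def by blast
      then show ?thesis unfolding mem_bc_O using s t a b by blast
    qed
  qed
  then show ?thesis by blast
qed

lemma inv_O: "x \<in> bc_O n a \<Longrightarrow> bc_inv x \<in> bc_O n (bc_inv a)"
proof -
  obtain i j where a: "a = (i,j)" by force
  assume "x \<in> bc_O n a"
  then obtain s where "x = (i+s, j+s)" "s = 0 \<or> s > n" using a mem_bc_O_param by metis
  then show ?thesis unfolding mem_bc_O a by auto
qed

lemma compact_O: "compactin tau2 (bc_O 0 x)"
  unfolding compactin_def
proof (intro conjI allI impI)
  show "bc_O 0 x \<subseteq> topspace tau2" by simp
  fix UU assume H: "(\<forall>U\<in>UU. openin tau2 U) \<and> bc_O 0 x \<subseteq> \<Union>UU"
  have "x \<in> bc_O 0 x" by (simp add: mem_bc_O)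
  then obtain B where B: "B \<in> UU" "x \<in> B" using H by blast
  then obtain N where N: "bc_O N x \<subseteq> B" using H openin_tau2 by blast
  define T where "T = (\<lambda>s. (fst x + s, snd x + s)) ` {1..N}"
  define g where "g y = (SOME C. C \<in> UU \<and> y \<in> C)" for y
  have Tsub: "T \<subseteq> bc_O 0 x" unfolding T_def by (auto simp: mem_bc_O)
  have g: "g y \<in> UU \<and> y \<in> g y" if "y \<in> T" for y
  proof -
    have "\<exists>C. C \<in> UU \<and> y \<in> C" using that Tsub H by blast
    then show ?thesis unfolding g_def by (rule someI_ex)
  qed
  show "\<exists>F. finite F \<and> F \<subseteq> UU \<and> bc_O 0 x \<subseteq> \<Union>F"
  proof (intro exI conjI)
    show "finite (insert B (g ` T))" unfolding T_def by simp
    show "insert B (g ` T) \<subseteq> UU" using B g by blast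
    show "bc_O 0 x \<subseteq> \<Union>(insert B (g ` T))"
    proof
      fix z assume z: "z \<in> bc_O 0 x"
      show "z \<in> \<Union>(insert B (g ` T))"
      proof (cases "z \<in> bc_O N x")
        case True then show ?thesis using N by blast
      next
        case False
        then obtain s where s: "s > 0" "s \<le> N" "z = (fst x + s, snd x + s)"
          using z unfolding mem_bc_O by force
        then have "z \<in> T" unfolding T_def by auto
        then show ?thesis using g by blast
      qed
    qed
  qed
qed

theorem proposition2:
  shows "t1_space tau2
    \<and> locally_compact_space tau2
    \<and> continuous_map (prod_topology tau2 tau2) tau2 (\<lambda>(x, y). bc_mult x y)
    \<and> continuous_map tau2 tau2 bc_inv"
proof (intro conjI)
  show "t1_space tau2"
    unfolding t1_space_def
  proof (intro ballI impI)
    fix x y :: bicyclic assume "x \<noteq> y"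
    then have "y \<notin> bc_O (fst y) x" unfolding mem_bc_O by auto
    then show "\<exists>U. openin tau2 U \<and> x \<in> U \<and> y \<notin> U"
      using open_bc_O[of "fst y" x] by (intro exI[of _ "bc_O (fst y) x"]) (simp add: mem_bc_O)
  qed
  show "locally_compact_space tau2"
    unfolding locally_compact_space_def
    using open_bc_O compact_O by (metis mem_bc_O subset_refl)
  show "continuous_map (prod_topology tau2 tau2) tau2 (\<lambda>(x, y). bc_mult x y)"
    unfolding continuous_map_def
  proof (intro conjI allI impI)
    show "(\<lambda>(x, y). bc_mult x y) \<in> topspace (prod_topology tau2 tau2) \<rightarrow> topspace tau2" by simp
    fix U assume U: "openin tau2 U"
    show "openin (prod_topology tau2 tau2) {z \<in> topspace (prod_topology tau2 tau2). (\<lambda>(x, y). bc_mult x y) z \<in> U}"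
      unfolding openin_prod_topology_alt
    proof (intro allI impI)
      fix a b assume "(a, b) \<in> {z \<in> topspace (prod_topology tau2 tau2). (\<lambda>(x, y). bc_mult x y) z \<in> U}"
      then have "bc_mult a b \<in> U" by simp
      then obtain N where N: "bc_O N (bc_mult a b) \<subseteq> U" using U openin_tau2 by blast
      obtain M where M: "\<forall>x\<in>bc_O M a. \<forall>y\<in>bc_O M b. bc_mult x y \<in> bc_O N (bc_mult a b)"
        using mult_cont by blast
      show "\<exists>U' V'. openin tau2 U' \<and> openin tau2 V' \<and> a \<in> U' \<and> b \<in> V' \<and>
          U' \<times> V' \<subseteq> {z \<in> topspace (prod_topology tau2 tau2). (\<lambda>(x, y). bc_mult x y) z \<in> U}"
      proof (intro exI conjI)
        show "openin tau2 (bc_O M a)" "openin tau2 (bc_O M b)" by (rule open_bc_O)+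
        show "a \<in> bc_O M a" "b \<in> bc_O M b" by (simp_all add: bc_O_def)
        show "bc_O M a \<times> bc_O M b \<subseteq> {z \<in> topspace (prod_topology tau2 tau2). (\<lambda>(x, y). bc_mult x y) z \<in> U}"
        proof
          fix p assume "p \<in> bc_O M a \<times> bc_O M b"
          then obtain x y where "p = (x,y)" "x \<in> bc_O M a" "y \<in> bc_O M b" by blast
          then show "p \<in> {z \<in> topspace (prod_topology tau2 tau2). (\<lambda>(x, y). bc_mult x y) z \<in> U}"
            using M N by auto
        qed
      qed
    qed
  qed
  show "continuous_map tau2 tau2 bc_inv"
    unfolding continuous_map_def
  proof (intro conjI allI impI)
    show "bc_inv \<in> topspace tau2 \<rightarrow> topspace tau2" by simp
    fix U assume U: "openin tau2 U"
    show "openin tau2 {x \<in> topspace tau2. bc_inv x \<in> U}"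
      unfolding openin_tau2
    proof
      fix a assume "a \<in> {x \<in> topspace tau2. bc_inv x \<in> U}"
      then have "bc_inv a \<in> U" by simp
      then obtain n where n: "bc_O n (bc_inv a) \<subseteq> U" using U openin_tau2 by blast
      have "bc_O n a \<subseteq> {x \<in> topspace tau2. bc_inv x \<in> U}"
      proof
        fix x assume "x \<in> bc_O n a"
        then have "bc_inv x \<in> bc_O n (bc_inv a)" by (rule inv_O)
        then show "x \<in> {x \<in> topspace tau2. bc_inv x \<in> U}" using n by auto
      qed
      then show "\<exists>n. bc_O n a \<subseteq> {x \<in> topspace tau2. bc_inv x \<in> U}" by blast
    qed
  qed
qed

end
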